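(* Let $k\ge 2$ and $m$ be positive integers, and let \[ p_m(x) = x^k - m x^{k-1} - x^{k-2} - \dots - x - 1 . \] Then $p_m(x)$ has a unique positive real root $\varrho_m$, and it satisfies $m<\varrho_m<m+1$. Moreover, every complex root $\gamma\neq\varrho_m$ of $p_m(x)$ satisfies $|\gamma|<\varrho_m$.
   Context: For $k=2$ the polynomial is $p_m(x)=x^2-mx-1$. *)

theory Defs
  imports "HOL-Analysis.Analysis"
begin

definition pm :: "nat \<Rightarrow> nat \<Rightarrow> 'a::field \<Rightarrow> 'a" where
  "pm k m x = x ^ k - of_nat m * x ^ (k - 1) - (\<Sum>i<k - 1. x ^ i)"

end

theory Submission imports Defs begin

definition H :: "nat \<Rightarrow> nat \<Rightarrow> 'a::field \<Rightarrow> 'a" where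
  "H k m x = of_nat m / x + (\<Sum>i<k - 1. 1 / x ^ (k - i))"

lemma pm_H:
  fixes x :: "'a::field"
  assumes "x \<noteq> 0" "k \<ge> 1"
  shows "pm k m x = x ^ k * (1 - H k m x)"
proof -
  have a: "x ^ k * (of_nat m / x) = of_nat m * x ^ (k - 1)"
    using assms by (cases k) (auto simp: field_simps)
  have b: "x ^ k * (1 / x ^ (k - i)) = x ^ i" if "i < k - 1" for i
  proof -
    have "x ^ k = x ^ (k - i) * x ^ i" using that by (simp flip: power_add)
    then show ?thesis using assms by simp
  qed
  have "x ^ k * (1 - H k m x) = x ^ k - x ^ k * (of_nat m / x) - (\<Sum>i<k - 1. x ^ k * (1 / x ^ (k - i)))"
    unfolding H_def by (simp add: algebra_simps sum_distrib_left)
  also have "\<dots> = pm k m x" unfolding pm_def a using b by simp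
  finally show ?thesis by simp
qed

lemma H_strict_anti:
  fixes x y :: real
  assumes "0 < x" "x < y" "m \<ge> 1"
  shows "H k m y < H k m x"
proof -
  have "real m / y < real m / x" using assms by (simp add: frac_less2)
  moreover have "(\<Sum>i<k - 1. 1 / y ^ (k - i)) \<le> (\<Sum>i<k - 1. 1 / x ^ (k - i))"
    by (rule sum_mono) (use assms in \<open>auto intro!: divide_left_mono power_mono mult_pos_pos\<close>)
  ultimately show ?thesis unfolding H_def by simp
qed

lemma geo_less: "(m::nat) \<ge> 1 \<Longrightarrow> (\<Sum>i<n. (real m + 1) ^ i) < (real m + 1) ^ n"
proof (induction n)
  case 0 then show ?case by simp
next
  case (Suc n)
  have "(\<Sum>i<Suc n. (real m + 1) ^ i) < 2 * (real m + 1) ^ n" using Suc by simp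
  also have "\<dots> \<le> (real m + 1) ^ Suc n" using Suc.prems by simp
  finally show ?case .
qed

lemma re_ge_cmod: "Re z \<ge> cmod z \<Longrightarrow> z = complex_of_real (cmod z)"
proof -
  assume h: "Re z \<ge> cmod z"
  have "(Re z)\<^sup>2 + (Im z)\<^sup>2 = (cmod z)\<^sup>2" by (simp add: cmod_power2)
  moreover have "(Re z)\<^sup>2 \<ge> (cmod z)\<^sup>2" by (rule power_mono[OF h norm_ge_zero])
  ultimately have "(Im z)\<^sup>2 = 0" using zero_le_power2[of "Im z"] by linarith
  then have "Im z = 0" by simp
  moreover from this have "Re z = cmod z" using h by (simp add: cmod_def)
  ultimately show ?thesis by (simp add: complex_eq_iff)
qed


lemma pm_cont: "continuous_on S (pm k m :: real \<Rightarrow> real)"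
  unfolding pm_def by (intro continuous_intros)

theorem mainTheorem1:
  fixes k m :: nat
  assumes "k \<ge> 2" and "m \<ge> 1"
  shows "(\<exists>!\<rho>::real. \<rho> > 0 \<and> pm k m \<rho> = 0) \<and>
         (\<forall>\<rho>::real. \<rho> > 0 \<and> pm k m \<rho> = 0 \<longrightarrow>
           real m < \<rho> \<and> \<rho> < real m + 1 \<and>
           (\<forall>\<gamma>::complex. pm k m \<gamma> = 0 \<and> \<gamma> \<noteq> complex_of_real \<rho> \<longrightarrow> cmod \<gamma> < \<rho>))"
proof -
  have k1: "k \<ge> 1" using assms by simp
  have rootH: "pm k m x = 0 \<longleftrightarrow> H k m x = 1" if "x \<noteq> 0" for x :: "'a::field"
    using pm_H[OF that k1] that by simp
  have uniq: "x = y" if "x > 0" "y > 0" "pm k m x = 0" "pm k m y = (0::real)" for x y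
  proof -
    have "H k m x = 1" "H k m y = 1" using that rootH[of x] rootH[of y] by auto
    then have "H k m x = H k m y" by simp
    then show ?thesis using H_strict_anti[OF _ _ assms(2)] that
      by (metis less_irrefl linorder_neqE_linordered_idom)
  qed
  have "(\<Sum>i<k - 1. real m ^ i) \<ge> (\<Sum>i\<in>{0::nat}. real m ^ i)"
    by (rule sum_mono2) (use assms in auto)
  then have pmm: "pm k m (real m) < 0"
    unfolding pm_def using assms by (cases k) auto
  have pmm1: "pm k m (real m + 1) > 0"
  proof -
    have "(real m + 1) ^ k = (real m + 1) * (real m + 1) ^ (k - 1)"
      using k1 by (metis Suc_diff_1 less_le_trans power_Suc zero_less_one)
    then have "pm k m (real m + 1) = (real m + 1) ^ (k - 1) - (\<Sum>i<k - 1. (real m + 1) ^ i)"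
      unfolding pm_def by (simp add: algebra_simps)
    then show ?thesis using geo_less[OF assms(2), of "k - 1"] by simp
  qed
  obtain r where r: "real m \<le> r" "r \<le> real m + 1" "pm k m r = 0"
    using IVT'[of "pm k m" "real m" 0 "real m + 1"] pmm pmm1 pm_cont by force
  have rpos: "r > 0" using r(1) assms by simp
  have rb: "real m < r" "r < real m + 1" using r pmm pmm1 by (auto simp: order_le_less)
  have Hr: "H k m r = 1" using rootH[of r] rpos r by simp
  have cplx: "cmod g < r" if g: "pm k m g = 0" "g \<noteq> complex_of_real r" for g :: complex
  proof -
    have "g \<noteq> 0"
    proof
      assume "g = 0"
      then have "pm k m g = - (\<Sum>i<k - 1. (0::complex) ^ i)"
        unfolding pm_def using assms by (simp add: power_0_left)
      also have "(\<Sum>i<k - 1. (0::complex) ^ i) = 1"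
        using assms by (simp add: power_0_left sum.delta)
      finally show False using g by simp
    qed
    define s where "s = cmod g"
    have spos: "s > 0" using \<open>g \<noteq> 0\<close> by (simp add: s_def)
    have Hg: "H k m g = 1" using rootH[of g] \<open>g \<noteq> 0\<close> g by simp
    have "1 = Re (H k m g)" using Hg by simp
    also have "\<dots> = real m * Re (1 / g) + (\<Sum>i<k - 1. Re (1 / g ^ (k - i)))"
      proof -
      have "complex_of_nat m / g = complex_of_real (real m) * (1 / g)"
        by simp
      have rr: "Re (complex_of_real (real m) * w) = real m * Re w" for w
        by simp
      have "Re (complex_of_nat m / g) = real m * Re (1 / g)"
        unfolding \<open>complex_of_nat m / g = complex_of_real (real m) * (1 / g)\<close> by (rule rr)
      then show ?thesis unfolding H_def by (simp add: Re_sum)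
    qed
    also have "\<dots> \<le> real m * Re (1 / g) + (\<Sum>i<k - 1. 1 / s ^ (k - i))"
    proof -
      have "Re (1 / g ^ (k - i)) \<le> 1 / s ^ (k - i)" for i
        using complex_Re_le_cmod[of "1 / g ^ (k - i)"]
        by (simp add: s_def norm_divide norm_power)
      then show ?thesis by (intro add_left_mono sum_mono) auto
    qed
    finally have ineq: "1 \<le> real m * Re (1 / g) + (\<Sum>i<k - 1. 1 / s ^ (k - i))" .
    have reg: "Re (1 / g) \<le> 1 / s"
      using complex_Re_le_cmod[of "1 / g"] by (simp add: s_def norm_divide)
    have "real m * Re (1 / g) \<le> real m * (1 / s)" by (rule mult_left_mono[OF reg]) simp
    then have "1 \<le> H k m s" using ineq unfolding H_def by simp
    then have "s \<le> r"
    proof (rule contrapos_pp)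
      assume "\<not> s \<le> r"
      then have "H k m s < H k m r" using H_strict_anti[OF rpos _ assms(2), of s] by simp
      then show "\<not> 1 \<le> H k m s" using Hr by simp
    qed
    moreover have "s \<noteq> r"
    proof
      assume sr: "s = r"
      have "1 = real m / s + (\<Sum>i<k - 1. 1 / s ^ (k - i))" using Hr sr by (simp add: H_def)
      with ineq have "real m / s \<le> real m * Re (1 / g)" by linarith
      then have "real m * (1 / s) \<le> real m * Re (1 / g)" by simp
      then have "1 / s \<le> Re (1 / g)" by (rule mult_left_le_imp_le) (use assms in simp)
      then have "cmod (1 / g) \<le> Re (1 / g)" by (simp add: s_def norm_divide)
      then have "1 / g = complex_of_real (cmod (1 / g))" by (rule re_ge_cmod)
      then have "1 / g = complex_of_real (1 / r)" using sr by (simp add: s_def norm_divide)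
      then have "g = complex_of_real r"
      proof -
        have "g = 1 / (1 / g)" by simp
        also have "\<dots> = complex_of_real r" unfolding \<open>1 / g = complex_of_real (1 / r)\<close>
          using rpos by simp
        finally show ?thesis .
      qed
      then show False using g by simp
    qed
    ultimately show ?thesis by (simp add: s_def)
  qed
  show ?thesis
  proof (intro conjI allI impI)
    show "\<exists>!\<rho>::real. \<rho> > 0 \<and> pm k m \<rho> = 0"
      using rpos r(3) uniq by blast
  next
    fix \<rho> :: real assume h: "\<rho> > 0 \<and> pm k m \<rho> = 0"
    then have "\<rho> = r" using uniq rpos r(3) by blast
    then show "real m < \<rho>" "\<rho> < real m + 1" using rb by auto
    fix \<gamma> :: complex assume "pm k m \<gamma> = 0 \<and> \<gamma> \<noteq> complex_of_real \<rho>"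
    then show "cmod \<gamma> < \<rho>" using cplx \<open>\<rho> = r\<close> by blast
  qed
qed

end
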